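(* Let $V$ and $W$ be oriented $d$-dimensional inner-product spaces. Then for every $A\in\mathrm{Hom}(V,W)$, \[ \mathrm{dist}^2(A,\mathrm{SO}(V,W))\le\mathrm{dist}^2(A,\mathrm{O}(V,W))+4|\det A|^{1/d}\,\mathbf{1}_{\{\det A<0\}}. \]
   Context: $\mathrm{O}(V,W)$ is the set of linear isometries $V\to W$, and $\mathrm{SO}(V,W)$ is the subset of orientation-preserving ones. $\det A$ is the determinant of the matrix of $A$ with respect to positively oriented orthonormal bases of $V$ and $W$. Distances are measured in the Frobenius (Hilbert–Schmidt) norm. $\mathbf{1}_{\{\det A<0\}}$ equals $1$ if $\det A<0$ and $0$ otherwise. *)

theory Defs
  imports "HOL-Analysis.Analysis"
begin

(* Hom(V,W) for oriented d-dimensional inner-product spaces is identified, via positively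
   oriented orthonormal bases, with d x d real matrices  real^'n^'n  (d = CARD('n)). *)

definition O_mat :: "(real^'n^'n) set" where
  "O_mat = {Q. orthogonal_matrix Q}"

definition SO_mat :: "(real^'n^'n) set" where
  "SO_mat = {Q. orthogonal_matrix Q \<and> det Q = 1}"

lemma norm_matrix_is_frobenius:
  fixes A :: "real^'n^'m"
  shows "norm A = sqrt (\<Sum>i\<in>UNIV. \<Sum>j\<in>UNIV. (A $ i $ j)^2)"
  by (simp add: norm_vec_def L2_set_def real_sqrt_pow2 sum_nonneg)

end

theory Submission
  imports Defs
begin

lemma det_id_row_replace:
  fixes x :: "real^'n"
  assumes xk: "x $ k = 0"
  shows "det ((\<chi> r. if r = k then row k (mat 1) + x else row r (mat 1)) :: real^'n^'n) = 1"
proof -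
  let ?I = "mat 1 :: real^'n^'n"
  have xs: "x = (\<Sum>j\<in>UNIV-{k}. x $ j *s row j ?I)"
    using xk by (auto simp: vec_eq_iff sum_component row_def mat_def axis_def if_distrib cong: if_cong)
  have "(\<Sum>j\<in>UNIV-{k}. x $ j *s row j ?I) \<in> vec.span {row j ?I |j. j \<noteq> k}"
    apply (rule vec.span_sum)
    apply (rule vec.span_scale)
    apply (rule vec.span_base)
    by blast
  then have "x \<in> vec.span {row j ?I |j. j \<noteq> k}"
    by (rule ssubst[OF xs])
  from det_row_span[OF this] show ?thesis by (simp only: det_I)
qed


lemma LB_entry:
  fixes B :: "real^'n^'n"
  shows "((\<chi> i j. (if i=j then 1 else 0) - (if j = k \<and> i \<noteq> k then c i else 0)) ** B) $ i $ j
     = B$i$j - (if i \<noteq> k then c i * B$k$j else 0)"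
proof -
  have "((\<chi> i j. (if i=j then 1 else 0) - (if j = k \<and> i \<noteq> k then c i else 0)) ** B) $ i $ j
     = (\<Sum>l\<in>UNIV. (if i = l then B$l$j else 0) - (if l = k \<and> i \<noteq> k then c i * B$l$j else 0))"
    unfolding matrix_matrix_mult_def by (auto intro!: sum.cong simp: left_diff_distrib)
  also have "\<dots> = B$i$j - (if i \<noteq> k then c i * B$k$j else 0)"
    by (simp add: sum_subtractf)
  finally show ?thesis .
qed

lemma BU_entry:
  fixes B :: "real^'n^'n"
  shows "(B ** (\<chi> i j. (if i=j then 1 else 0) - (if i = k \<and> j \<noteq> k then c j else 0))) $ i $ j
     = B$i$j - (if j \<noteq> k then B$i$k * c j else 0)"
proof -
  have "(B ** (\<chi> i j. (if i=j then 1 else 0) - (if i = k \<and> j \<noteq> k then c j else 0))) $ i $ j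
     = (\<Sum>l\<in>UNIV. (if l = j then B$i$l else 0) - (if l = k \<and> j \<noteq> k then B$i$l * c j else 0))"
    unfolding matrix_matrix_mult_def by (auto intro!: sum.cong simp: right_diff_distrib)
  also have "\<dots> = B$i$j - (if j \<noteq> k then B$i$k * c j else 0)"
    by (simp add: sum_subtractf)
  finally show ?thesis .
qed

lemma det_schur_step:
  fixes B :: "real^'n^'n"
  assumes a: "B$k$k \<noteq> 0"
  shows "det B = B$k$k * det ((\<chi> i j. if i = k \<or> j = k then (if i = j then 1 else 0)
                     else B$i$j - B$i$k * B$k$j / B$k$k) :: real^'n^'n)"
proof -
  define a where "a = B$k$k"
  define M where "M = ((\<chi> i j. if i = k \<or> j = k then (if i = j then 1 else 0)
                     else B$i$j - B$i$k * B$k$j / a) :: real^'n^'n)"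
  define L where "L = ((\<chi> i j. (if i=j then 1 else 0) - (if j = k \<and> i \<noteq> k then B$i$k/a else 0)) :: real^'n^'n)"
  define U where "U = ((\<chi> i j. (if i=j then 1 else 0) - (if i = k \<and> j \<noteq> k then B$k$j/a else 0)) :: real^'n^'n)"
  have dU: "det U = 1"
  proof -
    have "U = (\<chi> r. if r = k then row k (mat 1) + (\<chi> j. if j = k then 0 else - B$k$j/a) else row r (mat 1))"
      unfolding U_def by (auto simp: vec_eq_iff row_def mat_def)
    then show ?thesis using det_id_row_replace[of "\<chi> j. if j = k then 0 else - B$k$j/a" k] by simp
  qed
  have dL: "det L = 1"
  proof -
    have "transpose L = (\<chi> r. if r = k then row k (mat 1) + (\<chi> j. if j = k then 0 else - B$j$k/a) else row r (mat 1))"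
      unfolding L_def by (auto simp: vec_eq_iff row_def mat_def transpose_def)
    then have "det (transpose L) = 1" using det_id_row_replace[of "\<chi> j. if j = k then 0 else - B$j$k/a" k] by simp
    then show ?thesis by simp
  qed
  have LB: "(L ** B) $ i $ j = B$i$j - (if i \<noteq> k then B$i$k/a * B$k$j else 0)" for i j
    unfolding L_def by (rule LB_entry)
  have prod: "(L ** B) ** U = (\<chi> i. if i = k then a *s row k M else row i M)"
  proof -
    have E1: "((L ** B) ** U) $ i $ j = (L**B)$i$j - (if j \<noteq> k then (L**B)$i$k * (B$k$j/a) else 0)" for i j
      unfolding U_def by (rule BU_entry)
    have a0: "a \<noteq> 0" using a unfolding a_def .
    have E: "((L ** B) ** U) $ i $ j = (\<chi> i. if i = k then a *s row k M else row i M) $ i $ j" for i j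
      unfolding E1 LB using a0
      by (cases "i = k"; cases "j = k") (auto simp: row_def M_def a_def field_simps)
    then show ?thesis by (simp add: vec_eq_iff)
  qed
  have "det ((L ** B) ** U) = det B"
    by (simp add: det_mul dL dU)
  moreover have "det (\<chi> i. if i = k then a *s row k M else row i M) = a * det M"
  proof -
    have "det (\<chi> i. if i = k then a *s row k M else row i M) = a * det (\<chi> i. if i = k then row k M else row i M)"
      by (rule det_row_mul)
    moreover have "(\<chi> i. if i = k then row k M else row i M) = M"
      by (auto simp: vec_eq_iff row_def)
    ultimately show ?thesis by simp
  qed
  ultimately show ?thesis using prod unfolding M_def a_def by simp
qed


lemma quad_expand:
  fixes M :: "real^'n^'n"
  shows "x \<bullet> (M *v y) = (\<Sum>i\<in>UNIV. \<Sum>j\<in>UNIV. x$i * M$i$j * y$j)"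
  by (simp add: inner_vec_def matrix_vector_mult_def sum_distrib_left mult.assoc)

lemma axis_right_quad:
  fixes M :: "real^'n^'n"
  shows "x \<bullet> (M *v axis k 1) = (\<Sum>i\<in>UNIV. x$i * M$i$k)"
  unfolding matrix_vector_mult_basis by (simp add: inner_vec_def column_def)

lemma axis_left_quad:
  fixes M :: "real^'n^'n"
  shows "axis k 1 \<bullet> (M *v y) = (\<Sum>j\<in>UNIV. M$k$j * y$j)"
  by (simp add: inner_axis' matrix_vector_mult_def)

lemma det_ge_pow_aux:
  fixes l :: real
  assumes lpos: "l > 0"
  shows "finite S \<Longrightarrow> \<forall>M::real^'n^'n. (\<forall>i j. (i \<notin> S \<or> j \<notin> S) \<longrightarrow> M$i$j = (if i=j then 1 else 0))
     \<longrightarrow> (\<forall>x. (\<forall>i. i \<notin> S \<longrightarrow> x$i = 0) \<longrightarrow> l * (x \<bullet> x) \<le> x \<bullet> (M *v x))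
     \<longrightarrow> l ^ card S \<le> det M"
proof (induction S rule: finite_induct)
  case empty
  show ?case
  proof (intro allI impI)
    fix M :: "real^'n^'n"
    assume "\<forall>i j. (i \<notin> {} \<or> j \<notin> {}) \<longrightarrow> M$i$j = (if i=j then 1 else 0)"
    then have "M = mat 1" by (simp add: vec_eq_iff mat_def)
    then show "l ^ card {} \<le> det M" by simp
  qed
next
  case (insert k T)
  show ?case
  proof (intro allI impI)
    fix M :: "real^'n^'n"
    assume out: "\<forall>i j. (i \<notin> insert k T \<or> j \<notin> insert k T) \<longrightarrow> M$i$j = (if i=j then 1 else 0)"
      and quad: "\<forall>x. (\<forall>i. i \<notin> insert k T \<longrightarrow> x$i = 0) \<longrightarrow> l * (x \<bullet> x) \<le> x \<bullet> (M *v x)"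
    define a where "a = M$k$k"
    have ala: "l \<le> a"
    proof -
      have "l * (axis k (1::real) \<bullet> axis k (1::real)) \<le> axis k 1 \<bullet> (M *v axis k (1::real))"
        using mp[OF spec[OF quad, of "axis k 1"]] by (simp add: axis_def)
      moreover have "axis k 1 \<bullet> (M *v axis k (1::real)) = a"
        unfolding axis_right_quad a_def by (simp add: axis_def if_distrib[of "\<lambda>z. z * _"] cong: if_cong)
      ultimately show ?thesis by simp
    qed
    then have apos: "a > 0" using lpos by simp
    define M3 where "M3 = ((\<chi> i j. if i = k \<or> j = k then (if i = j then 1 else 0)
                     else M$i$j - M$i$k * M$k$j / M$k$k) :: real^'n^'n)"
    have dM: "det M = a * det M3"
      unfolding M3_def a_def using apos a_def det_schur_step[of M k] by simp
    have out3: "\<forall>i j. (i \<notin> T \<or> j \<notin> T) \<longrightarrow> M3$i$j = (if i=j then 1 else 0)"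
    proof (intro allI impI)
      fix i j assume ij: "i \<notin> T \<or> j \<notin> T"
      show "M3$i$j = (if i=j then 1 else 0)"
      proof (cases "i = k \<or> j = k")
        case True then show ?thesis by (simp add: M3_def)
      next
        case False
        then have "i \<notin> insert k T \<or> j \<notin> insert k T" using ij by auto
        then show ?thesis using False out
          by (auto simp: M3_def)
      qed
    qed
    have quad3: "\<forall>y. (\<forall>i. i \<notin> T \<longrightarrow> y$i = 0) \<longrightarrow> l * (y \<bullet> y) \<le> y \<bullet> (M3 *v y)"
    proof (intro allI impI)
      fix y :: "real^'n"
      assume ysupp: "\<forall>i. i \<notin> T \<longrightarrow> y$i = 0"
      have yk: "y$k = 0" using ysupp insert.hyps(2) by auto
      define p where "p = (\<Sum>j\<in>UNIV. M$k$j * y$j)"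
      define q where "q = (\<Sum>i\<in>UNIV. y$i * M$i$k)"
      define Q where "Q = y \<bullet> (M *v y)"
      have c1: "y \<bullet> (M3 *v y) = Q - q * p / a"
      proof -
        have "y \<bullet> (M3 *v y) = (\<Sum>i\<in>UNIV. \<Sum>j\<in>UNIV. y$i * M3$i$j * y$j)" by (rule quad_expand)
        also have "\<dots> = (\<Sum>i\<in>UNIV. \<Sum>j\<in>UNIV. y$i * M$i$j * y$j - (y$i * M$i$k) * (M$k$j * y$j) / a)"
          unfolding M3_def a_def using yk
          by (intro sum.cong refl) (auto simp: algebra_simps)
        also have "\<dots> = Q - q * p / a"
          unfolding Q_def quad_expand p_def q_def
          apply (simp add: sum_subtractf sum_divide_distrib sum_distrib_left sum_distrib_right)
          by (rule sum.swap)
        finally show ?thesis .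
      qed
      define s where "s = - (p + q) / (2 * a)"
      define x where "x = y + s *\<^sub>R axis k (1::real)"
      have xsupp: "\<forall>i. i \<notin> insert k T \<longrightarrow> x$i = 0"
        using ysupp by (auto simp: x_def axis_def)
      have xx: "x \<bullet> x = y \<bullet> y + s^2"
        unfolding x_def using yk
        by (simp add: inner_add_left inner_add_right inner_axis inner_axis' power2_eq_square algebra_simps)
      have xMx: "x \<bullet> (M *v x) = Q + s * q + s * p + s^2 * a"
      proof -
        have e1: "y \<bullet> (M *v axis k 1) = q"
          unfolding axis_right_quad q_def ..
        have e2: "axis k 1 \<bullet> (M *v y) = p"
          unfolding axis_left_quad p_def ..
        have e3: "axis k 1 \<bullet> (M *v axis k (1::real)) = a"
          unfolding axis_right_quad a_def by (simp add: axis_def if_distrib[of "\<lambda>z. z * _"] cong: if_cong)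
        show ?thesis
          unfolding x_def Q_def
          by (simp add: matrix_vector_right_distrib matrix_vector_mult_scaleR inner_add_left inner_add_right e1 e2 e3 power2_eq_square algebra_simps)
      qed
      have "l * (x \<bullet> x) \<le> x \<bullet> (M *v x)" using quad xsupp by blast
      then have h1: "l * (y \<bullet> y) + l * s^2 \<le> Q + s * q + s * p + s^2 * a"
        unfolding xx xMx by (simp add: algebra_simps)
      have h2: "s * q + s * p + s^2 * a = -(((p+q)^2) / (4*a))"
        unfolding s_def using apos by (simp add: field_simps power2_eq_square)
      have h3: "q * p / a \<le> (p+q)^2 / (4*a)"
      proof -
        have "4 * (q * p) \<le> (p+q)^2" using sum_squares_ge_zero[of "p - q" 0]
          by (simp add: power2_eq_square algebra_simps)
        then show ?thesis using apos by (simp add: field_simps)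
      qed
      have "l * s^2 \<ge> 0" using lpos by simp
      then show "l * (y \<bullet> y) \<le> y \<bullet> (M3 *v y)"
        unfolding c1 using h1 h2 h3 by linarith
    qed
    have ih: "l ^ card T \<le> det M3" using insert.IH out3 quad3 by blast
    have "l ^ card (insert k T) = l * l ^ card T" using insert.hyps by simp
    also have "\<dots> \<le> a * det M3"
      using ih ala lpos by (intro mult_mono) auto
    finally show "l ^ card (insert k T) \<le> det M" using dM by simp
  qed
qed

lemma det_ge_pow:
  fixes M :: "real^'n^'n"
  assumes "l > 0" "\<And>x. l * (x \<bullet> x) \<le> x \<bullet> (M *v x)"
  shows "l ^ CARD('n) \<le> det M"
  using det_ge_pow_aux[OF assms(1), of UNIV] assms(2) by auto


lemma mat_diff_ldistrib: "(A::real^'n^'m) ** (B - C) = A ** B - A ** C"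
  by (simp add: matrix_matrix_mult_def vec_eq_iff sum_subtractf right_diff_distrib)

lemma mat_diff_rdistrib: "((B::real^'n^'m) - C) ** (A::real^'k^'n) = B ** A - C ** A"
  by (simp add: matrix_matrix_mult_def vec_eq_iff sum_subtractf left_diff_distrib)

lemma norm_sq_trace: "(norm (X::real^'n^'m))^2 = trace (transpose X ** X)"
proof -
  have "(norm X)^2 = (\<Sum>i\<in>UNIV. \<Sum>j\<in>UNIV. (X $ i $ j)^2)"
    unfolding norm_matrix_is_frobenius by (simp add: sum_nonneg)
  also have "\<dots> = (\<Sum>j\<in>UNIV. \<Sum>i\<in>UNIV. (X $ i $ j)^2)" by (rule sum.swap)
  also have "\<dots> = trace (transpose X ** X)"
    by (simp add: trace_def matrix_matrix_mult_def transpose_def power2_eq_square)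
  finally show ?thesis .
qed

lemma norm_orth_left:
  assumes "orthogonal_matrix (U::real^'m^'m)"
  shows "norm (U ** (X::real^'n^'m)) = norm X"
proof -
  have "(norm (U ** X))^2 = (norm X)^2"
    unfolding norm_sq_trace matrix_transpose_mul
    using assms unfolding orthogonal_matrix_def
    by (metis matrix_mul_assoc matrix_mul_lid)
  then show ?thesis by (simp add: power2_eq_iff_nonneg)
qed

lemma norm_orth_right:
  assumes "orthogonal_matrix (U::real^'n^'n)"
  shows "norm ((X::real^'n^'m) ** U) = norm X"
proof -
  have "(norm (X ** U))^2 = trace ((transpose X ** X) ** (U ** transpose U))"
    unfolding norm_sq_trace matrix_transpose_mul
    by (metis matrix_mul_assoc trace_mul_sym)
  also have "\<dots> = (norm X)^2"
    using assms unfolding orthogonal_matrix_def norm_sq_trace by simp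
  finally show ?thesis by (simp add: power2_eq_iff_nonneg)
qed

lemma closed_O_mat: "closed (O_mat :: (real^'n^'n) set)"
proof -
  have "O_mat = {Q::real^'n^'n. \<forall>i j. (\<Sum>l\<in>UNIV. Q$l$i * Q$l$j) = (if i = j then 1 else 0)}"
    unfolding O_mat_def orthogonal_matrix
    by (auto simp: vec_eq_iff matrix_matrix_mult_def transpose_def mat_def)
  moreover have "closed {Q::real^'n^'n. \<forall>i j. (\<Sum>l\<in>UNIV. Q$l$i * Q$l$j) = (if i = j then 1 else 0)}"
    by (intro closed_Collect_all closed_Collect_eq continuous_intros)
  ultimately show ?thesis by simp
qed


lemma frob_diff_D:
  fixes C :: "real^'n^'n" and k :: 'n
  defines "D \<equiv> (\<chi> i j. if i = j then (if i = k then -1 else 1) else 0) :: real^'n^'n"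
  shows "(norm (C - D))^2 = (norm (C - mat 1))^2 + 4 * C$k$k"
proof -
  have pt: "(C$i$j - D$i$j)^2 = (C$i$j - (mat 1::real^'n^'n)$i$j)^2 + (if i = k then (if j = k then 4 * C$k$k else 0) else 0)" for i j
    unfolding D_def by (auto simp: mat_def power2_eq_square algebra_simps)
  have "(norm (C - D))^2 = (\<Sum>i\<in>UNIV. \<Sum>j\<in>UNIV. (C$i$j - D$i$j)^2)"
    unfolding norm_matrix_is_frobenius by (simp add: sum_nonneg)
  also have "\<dots> = (\<Sum>i\<in>UNIV. \<Sum>j\<in>UNIV. (C$i$j - (mat 1::real^'n^'n)$i$j)^2) + 4 * C$k$k"
  proof -
    have e: "(\<lambda>i. \<Sum>j\<in>UNIV. (if i = k then (if j = k then 4 * C$k$k else 0) else 0)) = (\<lambda>i. if i = k then 4 * C$k$k else 0)"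
      by (rule ext) simp
    show ?thesis unfolding pt sum.distrib e by simp
  qed
  also have "(\<Sum>i\<in>UNIV. \<Sum>j\<in>UNIV. (C$i$j - (mat 1::real^'n^'n)$i$j)^2) = (norm (C - mat 1))^2"
    unfolding norm_matrix_is_frobenius by (simp add: sum_nonneg)
  finally show ?thesis .
qed

theorem lemmaA5:
  fixes A :: "real^'n^'n"
  shows "(infdist A SO_mat)^2 \<le> (infdist A O_mat)^2
           + 4 * \<bar>det A\<bar> powr (1 / real CARD('n)) * (if det A < 0 then 1 else 0)"
proof -
  let ?T = "4 * \<bar>det A\<bar> powr (1 / real CARD('n)) * (if det A < 0 then 1 else 0)"
  have Tnn: "0 \<le> ?T" by simp
  have One: "O_mat \<noteq> {}" unfolding O_mat_def using orthogonal_matrix_id by blast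
  obtain Q where QO: "Q \<in> O_mat" and Qmin: "\<And>Y. Y \<in> O_mat \<Longrightarrow> dist A Q \<le> dist A Y"
    using distance_attains_inf[OF closed_O_mat One] by blast
  have iO: "infdist A O_mat = dist A Q"
  proof (rule antisym)
    show "infdist A O_mat \<le> dist A Q" by (rule infdist_le[OF QO])
    show "dist A Q \<le> infdist A O_mat"
      unfolding infdist_notempty[OF One] using One Qmin by (intro cINF_greatest) auto
  qed
  have oQ: "orthogonal_matrix Q" using QO unfolding O_mat_def by simp
  have sq: "(infdist A SO_mat)^2 \<le> (dist A Y)^2" if "Y \<in> SO_mat" for Y
    using infdist_le[OF that, of A] infdist_nonneg by (intro power_mono) auto
  consider "det Q = 1" | "det Q = -1" using det_orthogonal_matrix[OF oQ] by blast
  then show ?thesis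
  proof cases
    case 1
    then have "Q \<in> SO_mat" using oQ unfolding SO_mat_def by simp
    then have "(infdist A SO_mat)^2 \<le> (infdist A O_mat)^2" using sq[of Q] iO by simp
    then show ?thesis using Tnn by linarith
  next
    case 2
    define B where "B = transpose Q ** A"
    have QB: "Q ** B = A"
      using oQ unfolding B_def orthogonal_matrix_def by (metis matrix_mul_assoc matrix_mul_lid)
    have dB: "det B = - det A" unfolding B_def using 2 by (simp add: det_mul)
    have cont: "continuous_on (sphere 0 1) (\<lambda>x::real^'n. x \<bullet> (B *v x))"
      by (intro continuous_intros linear_continuous_on matrix_vector_mul_linear)
    have sne: "sphere (0::real^'n) 1 \<noteq> {}" by simp
    obtain v where vS: "v \<in> sphere (0::real^'n) 1"
      and vmin: "\<And>x. x \<in> sphere 0 1 \<Longrightarrow> v \<bullet> (B *v v) \<le> x \<bullet> (B *v x)"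
      using continuous_attains_inf[OF compact_sphere sne cont] by blast
    define l where "l = v \<bullet> (B *v v)"
    have lquad: "l * (x \<bullet> x) \<le> x \<bullet> (B *v x)" for x
    proof (cases "x = 0")
      case True then show ?thesis by simp
    next
      case False
      define u where "u = x /\<^sub>R norm x"
      have "u \<in> sphere 0 1" using False unfolding u_def by simp
      then have "l \<le> u \<bullet> (B *v u)" using vmin unfolding l_def by blast
      then have "l * (norm x)^2 \<le> (norm x)^2 * (u \<bullet> (B *v u))"
        by (simp add: mult.commute mult_right_mono)
      moreover have "x = norm x *\<^sub>R u" using False unfolding u_def by simp
      then have "x \<bullet> (B *v x) = (norm x)^2 * (u \<bullet> (B *v u))"
        by (metis inner_scaleR_left inner_scaleR_right matrix_vector_mult_scaleR mult.assoc power2_eq_square)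
      ultimately show ?thesis by (simp add: power2_norm_eq_inner)
    qed
    obtain k :: 'n where True by simp
    have nv: "norm v = 1" using vS by simp
    obtain P where oP: "orthogonal_matrix P" and Pv: "P *v axis k 1 = v"
      using orthogonal_matrix_exists_basis[OF nv] by blast
    define D where "D = ((\<chi> i j. if i = j then (if i = k then -1 else 1) else 0) :: real^'n^'n)"
    define R where "R = P ** D ** transpose P"
    define C where "C = transpose P ** B ** P"
    have oD: "orthogonal_matrix D"
    proof -
      have "(transpose D ** D)$i$j = (mat 1::real^'n^'n)$i$j" for i j
      proof -
        have "(transpose D ** D)$i$j = (\<Sum>l\<in>UNIV. D$l$i * D$l$j)"
          by (simp add: matrix_matrix_mult_def transpose_def)
        also have "\<dots> = (\<Sum>l\<in>UNIV. if l = i then (if i = j then 1 else 0) else 0)"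
          by (rule sum.cong) (auto simp: D_def)
        also have "\<dots> = (mat 1::real^'n^'n)$i$j" by (simp add: mat_def)
        finally show ?thesis .
      qed
      then show ?thesis unfolding orthogonal_matrix by (simp add: vec_eq_iff)
    qed
    have dD: "det D = -1"
    proof -
      have "det D = (\<Prod>i\<in>UNIV. D$i$i)"
        by (rule det_diagonal) (simp add: D_def)
      also have "\<dots> = (\<Prod>i\<in>UNIV. if i = k then -1 else 1)"
        by (rule prod.cong) (simp_all add: D_def)
      also have "\<dots> = -1" by simp
      finally show ?thesis .
    qed
    have oR: "orthogonal_matrix R"
      unfolding R_def by (intro orthogonal_matrix_mul oP oD) (simp add: oP)
    have dP: "det P * det P = 1"
      using oP unfolding orthogonal_matrix_def by (metis det_I det_mul det_transpose)
    have dR: "det R = -1"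
    proof -
      have "det R = det P * det D * det P" unfolding R_def by (simp add: det_mul)
      also have "\<dots> = - (det P * det P)" using dD by simp
      finally show ?thesis using dP by simp
    qed
    define Q' where "Q' = Q ** R"
    have Q'S: "Q' \<in> SO_mat"
    proof -
      have "orthogonal_matrix Q'" unfolding Q'_def using oQ oR by (rule orthogonal_matrix_mul)
      moreover have "det Q' = 1" unfolding Q'_def using 2 dR by (simp add: det_mul)
      ultimately show ?thesis unfolding SO_mat_def by simp
    qed
    have PP: "P ** transpose P = mat 1" using oP unfolding orthogonal_matrix_def by simp
    have PP': "transpose P ** P = mat 1" using oP unfolding orthogonal_matrix_def by simp
    have BC: "B = P ** C ** transpose P"
    proof -
      have "P ** C ** transpose P = (P ** transpose P) ** B ** (P ** transpose P)"
        unfolding C_def by (simp only: matrix_mul_assoc)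
      then show ?thesis using PP by simp
    qed
    have AE: "A = Q ** (P ** C ** transpose P)" using QB BC by simp
    have oPt: "orthogonal_matrix (transpose P)" using oP by simp
    have nconj: "norm (Q ** (P ** X ** transpose P)) = norm X" for X
    proof -
      have "norm (Q ** (P ** X ** transpose P)) = norm (P ** X ** transpose P)" by (rule norm_orth_left[OF oQ])
      also have "\<dots> = norm (P ** X)" by (rule norm_orth_right[OF oPt])
      also have "\<dots> = norm X" by (rule norm_orth_left[OF oP])
      finally show ?thesis .
    qed
    have n1: "norm (A - Q') = norm (C - D)"
    proof -
      have "A - Q' = Q ** (P ** (C - D) ** transpose P)"
        unfolding Q'_def R_def AE by (simp only: mat_diff_ldistrib mat_diff_rdistrib)
      then show ?thesis using nconj by simp
    qed
    have n2: "norm (A - Q) = norm (C - mat 1)"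
    proof -
      have "Q = Q ** (P ** mat 1 ** transpose P)" using PP by simp
      then have "A - Q = Q ** (P ** C ** transpose P) - Q ** (P ** mat 1 ** transpose P)"
        using AE by simp
      also have "\<dots> = Q ** (P ** (C - mat 1) ** transpose P)"
        by (simp only: mat_diff_ldistrib mat_diff_rdistrib)
      finally show ?thesis using nconj by simp
    qed
    have Ckk: "C$k$k = l"
    proof -
      have col: "P$i$k = v$i" for i
        using Pv unfolding matrix_vector_mult_basis by (simp add: vec_eq_iff column_def)
      have "C$k$k = (\<Sum>j\<in>UNIV. (\<Sum>i\<in>UNIV. v$i * B$i$j) * v$j)"
        unfolding C_def by (simp add: matrix_matrix_mult_def transpose_def col)
      also have "\<dots> = (\<Sum>j\<in>UNIV. \<Sum>i\<in>UNIV. v$i * B$i$j * v$j)"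
        by (simp add: sum_distrib_right)
      also have "\<dots> = (\<Sum>i\<in>UNIV. \<Sum>j\<in>UNIV. v$i * B$i$j * v$j)"
        by (rule sum.swap)
      finally show ?thesis unfolding l_def quad_expand by simp
    qed
    have key: "(dist A Q')^2 = (infdist A O_mat)^2 + 4 * l"
      unfolding iO dist_norm n1 n2 Ckk[symmetric] D_def by (rule frob_diff_D)
    have "4 * l \<le> ?T"
    proof (cases "l > 0")
      case False
      then have "4 * l \<le> 0" by simp
      then show ?thesis using Tnn by linarith
    next
      case True
      have "l ^ CARD('n) \<le> det B" by (rule det_ge_pow[OF True lquad])
      moreover have "0 < l ^ CARD('n)" using True by simp
      ultimately have neg: "det A < 0" and ab: "l ^ CARD('n) \<le> \<bar>det A\<bar>" using dB by auto
      have "l = (l ^ CARD('n)) powr (1 / real CARD('n))"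
        using True by (simp add: powr_realpow[symmetric] powr_powr)
      also have "\<dots> \<le> \<bar>det A\<bar> powr (1 / real CARD('n))"
        using ab True by (intro powr_mono2) auto
      finally show ?thesis using neg by simp
    qed
    then show ?thesis using sq[OF Q'S] key by simp
  qed
qed

end
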